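(* Let $0<\alpha<\frac23$, $C>0$, $M>0$. Any minimizer $\varphi_M\in\Sigma_M$ of $I_M$ satisfies \[ \int_{\mathbb R^3}|\nabla\varphi_M|^2\,dx+\frac14 D[\varphi_M]-\frac{3\alpha C}{2\alpha+2}\int_{\mathbb R^3}|\varphi_M|^{2\alpha+2}\,dx=0. \]
   Context: For $u\in H^1(\mathbb R^3)$ (complex valued), $D[u]:=\iint_{\mathbb R^3\times\mathbb R^3}\frac{|u(x)|^2|u(x')|^2}{|x-x'|}\,dx\,dx'$ and $E[u]:=\frac12\int|\nabla u|^2\,dx+\frac14 D[u]-\frac{C}{2\alpha+2}\int|u|^{2\alpha+2}\,dx$; $\Sigma_M:=\{u\in H^1(\mathbb R^3):\|u\|_{L^2}^2=M\}$, $I_M:=\inf_{\Sigma_M}E$; a minimizer is $\varphi_M\in\Sigma_M$ with $E[\varphi_M]=I_M$. *)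

theory Defs
  imports "HOL-Analysis.Analysis"
begin

type_synonym R3 = "real ^ 3"

definition pd :: "3 \<Rightarrow> (R3 \<Rightarrow> real) \<Rightarrow> R3 \<Rightarrow> real" where
  "pd i f x = frechet_derivative f (at x) (axis i 1)"

fun pds :: "3 list \<Rightarrow> (R3 \<Rightarrow> real) \<Rightarrow> R3 \<Rightarrow> real" where
  "pds [] f = f"
| "pds (i # is) f = pd i (pds is f)"

definition smooth_fun :: "(R3 \<Rightarrow> real) \<Rightarrow> bool" where
  "smooth_fun f \<longleftrightarrow> (\<forall>is x. pds is f differentiable (at x))"

definition test_fun :: "(R3 \<Rightarrow> real) \<Rightarrow> bool" where
  "test_fun \<phi> \<longleftrightarrow> smooth_fun \<phi> \<and> compact (closure {x. \<phi> x \<noteq> 0})"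

definition square_integrable :: "(R3 \<Rightarrow> complex) \<Rightarrow> bool" where
  "square_integrable u \<longleftrightarrow> u \<in> borel_measurable lebesgue \<and>
     integrable lebesgue (\<lambda>x. (cmod (u x))\<^sup>2)"

definition weak_partial :: "(R3 \<Rightarrow> complex) \<Rightarrow> 3 \<Rightarrow> (R3 \<Rightarrow> complex) \<Rightarrow> bool" where
  "weak_partial u i g \<longleftrightarrow> (\<forall>\<phi>. test_fun \<phi> \<longrightarrow>
     (\<integral>x. u x * complex_of_real (pd i \<phi> x) \<partial>lebesgue) =
     - (\<integral>x. g x * complex_of_real (\<phi> x) \<partial>lebesgue))"

definition H1 :: "(R3 \<Rightarrow> complex) set" where
  "H1 = {u. square_integrable u \<and>
     (\<forall>i. \<exists>g. square_integrable g \<and> weak_partial u i g)}"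

definition wgrad :: "(R3 \<Rightarrow> complex) \<Rightarrow> 3 \<Rightarrow> R3 \<Rightarrow> complex" where
  "wgrad u i = (SOME g. square_integrable g \<and> weak_partial u i g)"

definition kinetic :: "(R3 \<Rightarrow> complex) \<Rightarrow> real" where
  "kinetic u = (\<integral>x. (\<Sum>i\<in>UNIV. (cmod (wgrad u i x))\<^sup>2) \<partial>lebesgue)"

definition L2sq :: "(R3 \<Rightarrow> complex) \<Rightarrow> real" where
  "L2sq u = (\<integral>x. (cmod (u x))\<^sup>2 \<partial>lebesgue)"

definition Dcoul :: "(R3 \<Rightarrow> complex) \<Rightarrow> real" where
  "Dcoul u = (\<integral>x. (\<integral>y. (cmod (u x))\<^sup>2 * (cmod (u y))\<^sup>2 / dist x y \<partial>lebesgue) \<partial>lebesgue)"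

definition Lpow :: "real \<Rightarrow> (R3 \<Rightarrow> complex) \<Rightarrow> real" where
  "Lpow p u = (\<integral>x. (cmod (u x)) powr p \<partial>lebesgue)"

definition energy :: "real \<Rightarrow> real \<Rightarrow> (R3 \<Rightarrow> complex) \<Rightarrow> real" where
  "energy C \<alpha> u = 1/2 * kinetic u + 1/4 * Dcoul u - C / (2*\<alpha>+2) * Lpow (2*\<alpha>+2) u"

definition Sigma_M :: "real \<Rightarrow> (R3 \<Rightarrow> complex) set" where
  "Sigma_M M = {u \<in> H1. L2sq u = M}"

definition I_M :: "real \<Rightarrow> real \<Rightarrow> real \<Rightarrow> real" where
  "I_M C \<alpha> M = Inf (energy C \<alpha> ` Sigma_M M)"

definition is_minimizer :: "real \<Rightarrow> real \<Rightarrow> real \<Rightarrow> (R3 \<Rightarrow> complex) \<Rightarrow> bool" where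
  "is_minimizer C \<alpha> M u \<longleftrightarrow> u \<in> Sigma_M M \<and> (\<forall>v\<in>Sigma_M M. energy C \<alpha> u \<le> energy C \<alpha> v)"

end

theory Submission
  imports Defs "HOL-Computational_Algebra.Polynomial"
begin


definition Ck :: "nat \<Rightarrow> (real \<Rightarrow> real) \<Rightarrow> bool" where
  "Ck n f \<longleftrightarrow> (\<forall>k<n. \<forall>x. (deriv ^^ k) f differentiable (at x))"

lemma Ck_0[simp]: "Ck 0 f" by (simp add: Ck_def)

lemma Ck_Suc: "Ck (Suc n) f \<longleftrightarrow> (\<forall>x. f differentiable (at x)) \<and> Ck n (deriv f)"
  unfolding Ck_def
  by (auto simp: less_Suc_eq_0_disj funpow_Suc_right simp del: funpow.simps)

lemma Ck_mono: "Ck (Suc n) f \<Longrightarrow> Ck n f"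
  unfolding Ck_def by auto

lemma deriv_has: "f differentiable (at x) \<Longrightarrow> (f has_real_derivative deriv f x) (at x)"
  using DERIV_deriv_iff_real_differentiable by blast

lemma deriv_add_fun:
  fixes f g :: "real \<Rightarrow> real"
  assumes "\<And>x. f differentiable (at x)" "\<And>x. g differentiable (at x)"
  shows "deriv (\<lambda>x. f x + g x) = (\<lambda>x. deriv f x + deriv g x)"
proof (rule ext, rule DERIV_imp_deriv)
  fix x show "((\<lambda>x. f x + g x) has_real_derivative deriv f x + deriv g x) (at x)"
    using deriv_has[OF assms(1)] deriv_has[OF assms(2)] by (rule DERIV_add)
qed

lemma deriv_mult_fun:
  fixes f g :: "real \<Rightarrow> real"
  assumes "\<And>x. f differentiable (at x)" "\<And>x. g differentiable (at x)"
  shows "deriv (\<lambda>x. f x * g x) = (\<lambda>x. deriv f x * g x + f x * deriv g x)"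
proof (rule ext, rule DERIV_imp_deriv)
  fix x show "((\<lambda>x. f x * g x) has_real_derivative deriv f x * g x + f x * deriv g x) (at x)"
    using DERIV_mult[OF deriv_has[OF assms(1)] deriv_has[OF assms(2)]] by (simp add: mult.commute)
qed

lemma Ck_add: "Ck n f \<Longrightarrow> Ck n g \<Longrightarrow> Ck n (\<lambda>x. f x + g x)"
proof (induction n arbitrary: f g)
  case (Suc n)
  then show ?case
    by (auto simp: Ck_Suc deriv_add_fun)
qed simp

lemma Ck_const: "Ck n (\<lambda>x. c)"
proof (induction n arbitrary: c)
  case (Suc n)
  have "deriv (\<lambda>x. c) = (\<lambda>x. 0)" by (rule ext) simp
  then show ?case using Suc by (auto simp: Ck_Suc)
qed simp

lemma Ck_mult: "Ck n f \<Longrightarrow> Ck n g \<Longrightarrow> Ck n (\<lambda>x. f x * g x)"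
proof (induction n arbitrary: f g)
  case (Suc n)
  from Suc.prems have df: "\<And>x. f differentiable (at x)" and dg: "\<And>x. g differentiable (at x)"
    and f': "Ck n (deriv f)" and g': "Ck n (deriv g)"
    by (auto simp: Ck_Suc)
  have "Ck n f" "Ck n g" using Suc.prems Ck_mono by auto
  then have "Ck n (\<lambda>x. deriv f x * g x + f x * deriv g x)"
    using Suc.IH f' g' by (intro Ck_add) auto
  then show ?case using df dg
    by (auto simp: Ck_Suc deriv_mult_fun)
qed simp

lemma Ck_affine: "Ck n f \<Longrightarrow> Ck n (\<lambda>x. f (c * x + d))"
proof (induction n arbitrary: f)
  case (Suc n)
  from Suc.prems have df: "\<And>x. f differentiable (at x)" and f': "Ck n (deriv f)"
    by (auto simp: Ck_Suc)
  have D: "((\<lambda>x. f (c * x + d)) has_real_derivative (deriv f (c*x+d) * c)) (at x)" for x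
    by (rule DERIV_chain2[OF deriv_has[OF df]]) (auto intro!: derivative_eq_intros)
  then have "deriv (\<lambda>x. f (c * x + d)) = (\<lambda>x. c * deriv f (c*x+d))"
    by (intro ext DERIV_imp_deriv) (simp add: mult.commute)
  moreover have "Ck n (\<lambda>x. c * deriv f (c*x+d))"
    by (intro Ck_mult Ck_const Suc.IH f')
  ultimately show ?case using D real_differentiable_def by (auto simp: Ck_Suc)
qed simp

definition smooth1 :: "(real \<Rightarrow> real) \<Rightarrow> bool" where
  "smooth1 f \<longleftrightarrow> (\<forall>n. Ck n f)"

lemma smooth1_deriv: "smooth1 f \<Longrightarrow> smooth1 (deriv f)"
  unfolding smooth1_def using Ck_Suc by blast

lemma smooth1_differentiable: "smooth1 f \<Longrightarrow> f differentiable (at x)"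
  unfolding smooth1_def using Ck_Suc by blast

lemma smooth1_funpow: "smooth1 f \<Longrightarrow> smooth1 ((deriv ^^ k) f)"
  by (induction k) (auto intro: smooth1_deriv)

lemma smooth1_add: "smooth1 f \<Longrightarrow> smooth1 g \<Longrightarrow> smooth1 (\<lambda>x. f x + g x)"
  and smooth1_mult: "smooth1 f \<Longrightarrow> smooth1 g \<Longrightarrow> smooth1 (\<lambda>x. f x * g x)"
  and smooth1_const: "smooth1 (\<lambda>x. c)"
  and smooth1_affine: "smooth1 f \<Longrightarrow> smooth1 (\<lambda>x. f (c * x + d))"
  unfolding smooth1_def by (auto intro: Ck_add Ck_mult Ck_const Ck_affine)

lemma smooth1_power: "smooth1 f \<Longrightarrow> smooth1 (\<lambda>x. f x ^ m)"
  by (induction m) (auto intro: smooth1_mult smooth1_const)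



definition Fp :: "real poly \<Rightarrow> real \<Rightarrow> real" where
  "Fp p t = (if t > 0 then poly p (1/t) * exp (-1/t) else 0)"

lemma poly_exp_lim: fixes r :: "real poly" shows "((\<lambda>s. poly r s * exp (- s)) \<longlongrightarrow> 0) at_top"
proof -
  have "((\<lambda>s. \<Sum>i\<le>degree r. coeff r i * (s ^ i / exp s)) \<longlongrightarrow> (\<Sum>i\<le>degree r. coeff r i * 0)) at_top"
    by (intro tendsto_sum tendsto_mult tendsto_const tendsto_power_div_exp_0)
  moreover have "(\<Sum>i\<le>degree r. coeff r i * (s ^ i / exp s)) = poly r s * exp (- s)" for s
    by (simp add: poly_altdef exp_minus divide_inverse sum_distrib_right mult.assoc)
  ultimately show ?thesis by simp
qed

lemma poly_inv_exp_lim: fixes r :: "real poly" shows "((\<lambda>t. poly r (1/t) * exp (-1/t)) \<longlongrightarrow> 0) (at_right 0)"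
  unfolding filterlim_at_right_to_top
proof (rule Lim_transform_eventually[OF poly_exp_lim[of r]])
  show "\<forall>\<^sub>F x in at_top. poly r x * exp (- x) = poly r (1 / inverse x) * exp (- 1 / inverse x)"
    using eventually_gt_at_top[of 0] by eventually_elim (simp add: divide_inverse)
qed

definition Fq :: "real poly \<Rightarrow> real poly" where
  "Fq p = [:0,0,1:] * (p - pderiv p)"

lemma Fp_deriv: "(Fp p has_real_derivative Fp (Fq p) x) (at x)"
proof -
  consider "x > 0" | "x < 0" | "x = 0" by linarith
  then show ?thesis
  proof cases
    case 1
    have D1: "((\<lambda>t. poly p (1/t) * exp (-1/t)) has_real_derivative
        poly (pderiv p) (1/x) * (- 1 / x^2) * exp (-1/x) + poly p (1/x) * (exp (-1/x) * (1/x^2))) (at x)"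
    proof -
      have inv: "((\<lambda>t. 1/t) has_real_derivative (- 1 / x^2)) (at x)"
        using 1 by (auto intro!: derivative_eq_intros simp: power2_eq_square field_simps)
      have A: "((\<lambda>t. poly p (1/t)) has_real_derivative poly (pderiv p) (1/x) * (- 1 / x^2)) (at x)"
        by (rule DERIV_chain2[OF poly_DERIV inv])
      have inv2: "((\<lambda>t. -1/t) has_real_derivative (1 / x^2)) (at x)"
        using 1 by (auto intro!: derivative_eq_intros simp: power2_eq_square field_simps)
      have B: "((\<lambda>t. exp (-1/t)) has_real_derivative exp (-1/x) * (1 / x^2)) (at x)"
        by (rule DERIV_chain2[OF DERIV_exp inv2])
      show ?thesis using DERIV_mult[OF A B] by (simp only: mult.commute[of "exp (-1/x) * (1/x^2)" "poly p (1/x)"])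
    qed
    moreover have "poly (pderiv p) (1/x) * (- 1 / x^2) * exp (-1/x) + poly p (1/x) * (exp (-1/x) * (1/x^2))
        = Fp (Fq p) x"
    proof -
      have e: "b * (- 1 / x^2) * e + a * (e * (1/x^2)) = (1/x) * (1/x) * (a - b) * e" for a b e :: real
        unfolding power2_eq_square by (simp add: algebra_simps add_divide_distrib[symmetric])
      have "Fp (Fq p) x = (1/x) * (1/x) * (poly p (1/x) - poly (pderiv p) (1/x)) * exp (-1/x)"
        unfolding Fp_def Fq_def using 1 by (simp only: if_True poly_mult poly_diff poly_pCons poly_0 mult_zero_right add_0 mult_1_right add_0_right)
      then show ?thesis by (simp only: e)
    qed
    ultimately have D2: "((\<lambda>t. poly p (1/t) * exp (-1/t)) has_real_derivative Fp (Fq p) x) (at x)"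
      by (simp only:)
    show ?thesis
      by (rule has_field_derivative_transform_within_open[OF D2, where S="{0<..}"]) (use 1 in \<open>simp_all add: Fp_def\<close>)
  next
    case 2
    have D0: "((\<lambda>t. 0) has_real_derivative Fp (Fq p) x) (at x)" using 2 by (simp add: Fp_def)
    show ?thesis
      by (rule has_field_derivative_transform_within_open[OF D0, where S="{..<0}"]) (use 2 in \<open>simp_all add: Fp_def\<close>)
  next
    case 3
    have L: "((\<lambda>y. (Fp p y - Fp p 0) / (y - 0)) \<longlongrightarrow> 0) (at_left 0)"
    proof (rule tendsto_eventually)
      show "\<forall>\<^sub>F y in at_left 0. (Fp p y - Fp p 0) / (y - 0) = (0::real)"
        unfolding eventually_at_left_field by (auto simp: Fp_def intro!: exI[of _ "-1"])
    qed
    have R0: "((\<lambda>t. poly ([:0,1:] * p) (1/t) * exp (-1/t)) \<longlongrightarrow> 0) (at_right 0)"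
      by (rule poly_inv_exp_lim)
    have R: "((\<lambda>y. (Fp p y - Fp p 0) / (y - 0)) \<longlongrightarrow> 0) (at_right 0)"
    proof (rule Lim_transform_eventually[OF R0])
      show "\<forall>\<^sub>F t in at_right 0. poly ([:0,1:] * p) (1/t) * exp (-1/t) = (Fp p t - Fp p 0) / (t - 0)"
        unfolding eventually_at_right_field by (auto simp: Fp_def intro!: exI[of _ 1])
    qed
    have "Fp (Fq p) 0 = 0" by (simp add: Fp_def)
    moreover have "((\<lambda>y. (Fp p y - Fp p 0) / (y - 0)) \<longlongrightarrow> 0) (at 0)"
      by (rule filterlim_split_at[OF L R])
    ultimately show ?thesis using 3
      unfolding has_field_derivative_iff by simp
  qed
qed

lemma Fp_smooth: "Ck n (Fp p)"
proof (induction n arbitrary: p)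
  case (Suc n)
  have "deriv (Fp p) = Fp (Fq p)"
    by (intro ext DERIV_imp_deriv Fp_deriv)
  then show ?case using Suc Fp_deriv real_differentiable_def by (auto simp: Ck_Suc)
qed simp

definition F0 :: "real \<Rightarrow> real" where "F0 = Fp 1"

lemma F0_smooth: "smooth1 F0"
  by (simp add: smooth1_def F0_def Fp_smooth)

lemma F0_pos: "t > 0 \<Longrightarrow> F0 t > 0" and F0_zero: "t \<le> 0 \<Longrightarrow> F0 t = 0"
  and F0_le1: "F0 t \<le> 1" and F0_nonneg: "F0 t \<ge> 0"
  by (auto simp: F0_def Fp_def)



definition prodfun :: "(3 \<Rightarrow> real \<Rightarrow> real) \<Rightarrow> R3 \<Rightarrow> real" where
  "prodfun a x = (\<Prod>i\<in>UNIV. a i (x $ i))"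

lemma coord_has_derivative:
  fixes f :: "real \<Rightarrow> real"
  assumes "f differentiable (at (x $ i))"
  shows "((\<lambda>x. f (x $ i)) has_derivative (\<lambda>h. h $ i * deriv f (x $ i))) (at x)"
proof -
  have "(f has_derivative (\<lambda>h. h * deriv f (x $ i))) (at (x $ i))"
  proof -
    have e: "(\<lambda>h. h * deriv f (x $ i)) = (*) (deriv f (x $ i))" by (rule ext) (simp add: mult.commute)
    show ?thesis unfolding e using deriv_has[OF assms] by (simp add: has_field_derivative_def)
  qed
  moreover have "((\<lambda>x. x $ i) has_derivative (\<lambda>h. h $ i)) (at x)"
    using bounded_linear_vec_nth bounded_linear_imp_has_derivative by blast
  ultimately show ?thesis using has_derivative_compose by blast
qed

lemma prodfun_has_derivative:
  assumes "\<And>i t. a i differentiable (at t)"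
  shows "(prodfun a has_derivative
     (\<lambda>h. \<Sum>i\<in>UNIV. h $ i * deriv (a i) (x $ i) * (\<Prod>j\<in>UNIV - {i}. a j (x $ j)))) (at x)"
  unfolding prodfun_def
  by (rule has_derivative_prod[where f="\<lambda>i x. a i (x $ i)" and f'="\<lambda>i h. h $ i * deriv (a i) (x $ i)"
      and I=UNIV and x=x and S=UNIV, simplified]) (rule coord_has_derivative[OF assms])

lemma prodfun_differentiable:
  assumes "\<And>i t. a i differentiable (at t)"
  shows "prodfun a differentiable (at x)"
  unfolding differentiable_def by (rule exI, rule prodfun_has_derivative[OF assms])

lemma pd_prodfun:
  assumes "\<And>i t. a i differentiable (at t)"
  shows "pd j (prodfun a) = prodfun (a(j := deriv (a j)))"
proof (rule ext)
  fix x
  have "pd j (prodfun a) x = (\<Sum>i\<in>UNIV. axis j 1 $ i * deriv (a i) (x $ i) * (\<Prod>k\<in>UNIV - {i}. a k (x $ k)))"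
    unfolding pd_def frechet_derivative_at[OF prodfun_has_derivative[OF assms, where x=x], symmetric]
    by (rule refl)
  also have "\<dots> = deriv (a j) (x $ j) * (\<Prod>k\<in>UNIV - {j}. a k (x $ k))"
    by (subst sum.remove[of _ j]) (auto simp: axis_def)
  also have "\<dots> = prodfun (a(j := deriv (a j))) x"
    unfolding prodfun_def
    by (subst prod.remove[of _ j]) (auto intro!: prod.cong)
  finally show "pd j (prodfun a) x = prodfun (a(j := deriv (a j))) x" .
qed

lemma pds_prodfun:
  assumes "\<And>i. smooth1 (a i)"
  shows "pds is (prodfun a) = prodfun (\<lambda>i. (deriv ^^ count_list is i) (a i))"
proof (induction "is")
  case Nil
  then show ?case by simp
next
  case (Cons j "is")
  have d: "\<And>i t. (\<lambda>i. (deriv ^^ count_list is i) (a i)) i differentiable (at t)"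
    using smooth1_differentiable smooth1_funpow assms by blast
  have "pds (j # is) (prodfun a) = pd j (prodfun (\<lambda>i. (deriv ^^ count_list is i) (a i)))"
    using Cons by simp
  also have "\<dots> = prodfun (\<lambda>i. (deriv ^^ count_list (j # is) i) (a i))"
  proof -
    have "((\<lambda>i. (deriv ^^ count_list is i) (a i))(j := deriv ((\<lambda>i. (deriv ^^ count_list is i) (a i)) j)))
        = (\<lambda>i. (deriv ^^ count_list (j # is) i) (a i))"
      by (auto simp: fun_eq_iff)
    then show ?thesis by (simp only: pd_prodfun[OF d])
  qed
  finally show ?case .
qed

lemma prodfun_smooth:
  assumes "\<And>i. smooth1 (a i)"
  shows "smooth_fun (prodfun a)"
  unfolding smooth_fun_def
proof (intro allI)
  fix "is" x
  show "pds is (prodfun a) differentiable (at x)"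
    unfolding pds_prodfun[OF assms]
    by (rule prodfun_differentiable) (use smooth1_differentiable smooth1_funpow assms in blast)
qed

lemma prodfun_test:
  assumes "\<And>i. smooth1 (a i)" and "\<And>i t. a i t \<noteq> 0 \<Longrightarrow> t \<in> {l i..u i}"
  shows "test_fun (prodfun a)"
proof -
  have "{x. prodfun a x \<noteq> 0} \<subseteq> cbox (\<chi> i. l i) (\<chi> i. u i)"
    using assms(2) by (auto simp: prodfun_def mem_box_cart)
  then have "closure {x. prodfun a x \<noteq> 0} \<subseteq> cbox (\<chi> i. l i) (\<chi> i. u i)"
    by (rule closure_minimal) (simp add: closed_cbox)
  then have "compact (closure {x. prodfun a x \<noteq> 0})"
  proof -
    have "compact (cbox (\<chi> i. l i) (\<chi> i. u i) \<inter> closure {x. prodfun a x \<noteq> 0})"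
      by (intro compact_Int_closed compact_cbox closed_closure)
    then show ?thesis using \<open>closure {x. prodfun a x \<noteq> 0} \<subseteq> _\<close> by (simp add: Int_absorb1)
  qed
  then show ?thesis using prodfun_smooth[OF assms(1)] by (simp add: test_fun_def)
qed



lemma sets_lborel_boxes:
  "sets (lborel :: R3 measure) = sigma_sets UNIV (range (\<lambda>(a, b). box a b :: R3 set))"
  by (simp add: borel_eq_box sets_measure_of)

lemma sigma_finite_lebesgue: "sigma_finite_measure (lebesgue :: R3 measure)"
proof -
  from sigma_finite_lborel obtain A where A: "countable A" "A \<subseteq> sets (lborel :: R3 measure)"
    "\<Union>A = space (lborel :: R3 measure)" "\<forall>a\<in>A. emeasure lborel a \<noteq> \<infinity>"
    unfolding sigma_finite_measure_def by blast
  have A2: "A \<subseteq> sets lebesgue" using A(2) by auto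
  have A3: "\<Union>A = space lebesgue" using A(3) by simp
  have A4: "\<forall>a\<in>A. emeasure lebesgue a \<noteq> \<infinity>"
  proof
    fix a assume "a \<in> A"
    then have "a \<in> sets lborel" using A(2) by blast
    then show "emeasure lebesgue a \<noteq> \<infinity>" using A(4) \<open>a \<in> A\<close> by simp
  qed
  show ?thesis unfolding sigma_finite_measure_def
    using A(1) A2 A3 A4 by blast
qed

lemma ae_zero_one_box:
  fixes f :: "R3 \<Rightarrow> complex"
  assumes meas: "f \<in> borel_measurable lebesgue"
    and int: "\<And>a b. integrable lebesgue (\<lambda>x. indicator (box a b) x *\<^sub>R f x)"
    and zero: "\<And>a b. (LINT x|lebesgue. indicator (box a b) x *\<^sub>R f x) = 0"
  shows "AE x in lebesgue. indicator (box c d) x *\<^sub>R f x = 0"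
proof -
  define g where "g x = indicator (box c d) x *\<^sub>R f x" for x
  have gint: "integrable lebesgue g" unfolding g_def by (rule int)
  have g0: "(LINT x|lebesgue. g x) = 0" unfolding g_def by (rule zero)
  have indA: "indicator A x *\<^sub>R g x = indicator (A \<inter> box c d) x *\<^sub>R f x" for A x
    by (simp add: g_def indicator_inter_arith)
  have Gint: "Int_stable (range (\<lambda>(a, b). box a b :: R3 set))"
    by (auto simp: Int_stable_def box_Int_box)
  have sig: "(LINT x|lebesgue. indicator A x *\<^sub>R g x) = 0"
    if "A \<in> sigma_sets UNIV (range (\<lambda>(a, b). box a b :: R3 set))" for A
  proof -
    have P: "range (\<lambda>(a, b). box a b :: R3 set) \<subseteq> Pow UNIV" by auto
    from Gint P that show ?thesis
  proof (induction rule: sigma_sets_induct_disjoint)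
    case (basic A)
    then obtain a b where A: "A = box a b" by auto
    show ?case unfolding indA A box_Int_box by (rule zero)
  next
    case empty
    show ?case by simp
  next
    case (compl A)
    then have "A \<in> sets lborel" using sets_lborel_boxes by blast
    then have Al: "A \<in> sets lebesgue" by auto
    have "(\<lambda>x. indicator (UNIV - A) x *\<^sub>R g x) = (\<lambda>x. g x - indicator A x *\<^sub>R g x)"
      by (auto simp: fun_eq_iff split: split_indicator)
    then have "(LINT x|lebesgue. indicator (UNIV - A) x *\<^sub>R g x)
        = (LINT x|lebesgue. g x) - (LINT x|lebesgue. indicator A x *\<^sub>R g x)"
      using gint integrable_mult_indicator[OF Al gint] by simp
    then show ?case using g0 compl.IH by simp
  next
    case (union A)
    have Al: "A i \<in> sets lebesgue" for i
      using union.hyps(2) by (auto simp: sets_lborel_boxes[symmetric])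
    define s where "s n x = (\<Sum>i<n. indicator (A i) x *\<^sub>R g x)" for n x
    have s_eq: "s n x = indicator (\<Union>i<n. A i) x *\<^sub>R g x" for n x
    proof -
      have "indicator (\<Union>i<n. A i) x = (\<Sum>i<n. indicator (A i) x :: real)"
        using union.hyps(1) by (intro indicator_UN_disjoint) (auto simp: disjoint_family_on_def)
      then show ?thesis by (simp add: s_def scaleR_sum_left)
    qed
    have lim: "(\<lambda>n. LINT x|lebesgue. s n x) \<longlonglongrightarrow> (LINT x|lebesgue. indicator (\<Union>i. A i) x *\<^sub>R g x)"
    proof (rule integral_dominated_convergence[where w="\<lambda>x. norm (g x)"])
      show "(\<lambda>x. indicator (\<Union>i. A i) x *\<^sub>R g x) \<in> borel_measurable lebesgue"
        using Al gint by (intro borel_measurable_scaleR borel_measurable_indicator) auto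
      show "s n \<in> borel_measurable lebesgue" for n
        unfolding s_def using Al gint by auto
      show "integrable lebesgue (\<lambda>x. norm (g x))" using gint by simp
      show "AE x in lebesgue. (\<lambda>n. s n x) \<longlonglongrightarrow> indicator (\<Union>i. A i) x *\<^sub>R g x"
        unfolding s_eq by (intro AE_I2 tendsto_scaleR LIMSEQ_indicator_UN tendsto_const)
      show "AE x in lebesgue. norm (s n x) \<le> norm (g x)" for n
        unfolding s_eq by (intro AE_I2) (auto split: split_indicator)
    qed
    moreover have "(LINT x|lebesgue. s n x) = 0" for n
      unfolding s_def using union.IH integrable_mult_indicator[OF Al gint]
      by (subst Bochner_Integration.integral_sum) auto
    ultimately have "(\<lambda>n. 0::complex) \<longlonglongrightarrow> (LINT x|lebesgue. indicator (\<Union>i. A i) x *\<^sub>R g x)"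
      by simp
    then show ?case by (simp add: LIMSEQ_const_iff)
  qed
  qed
  have "AE x in lebesgue. g x = 0"
  proof (rule sigma_finite_measure.density_zero[OF sigma_finite_lebesgue gint])
    fix S :: "R3 set" assume S: "S \<in> sets lebesgue"
    define T where "T = main_part lborel S"
    have T: "T \<in> sets lborel" unfolding T_def by (rule main_part_sets[OF S])
    have "AE x in (lborel :: R3 measure). x \<notin> null_part lborel S"
      using S by (rule AE_notin_null_part)
    then have ae: "AE x in lebesgue. indicator S x *\<^sub>R g x = indicator T x *\<^sub>R g x"
      unfolding AE_completion_iff
    proof eventually_elim
      case (elim x)
      have "x \<in> S \<longleftrightarrow> x \<in> T"
        using elim main_part_null_part_Un[OF S] main_part_null_part_Int[OF S] unfolding T_def by blast
      then show ?case by (simp add: indicator_def)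
    qed
    have "set_lebesgue_integral lebesgue S g = (LINT x|lebesgue. indicator T x *\<^sub>R g x)"
      unfolding set_lebesgue_integral_def
    proof (rule integral_cong_AE)
      have Tl: "T \<in> sets lebesgue" using T by simp
      show "(\<lambda>x. indicator S x *\<^sub>R g x) \<in> borel_measurable lebesgue"
        using S gint by (intro borel_measurable_scaleR borel_measurable_indicator) auto
      show "(\<lambda>x. indicator T x *\<^sub>R g x) \<in> borel_measurable lebesgue"
        using Tl gint by (intro borel_measurable_scaleR borel_measurable_indicator) auto
    qed (rule ae)
    also have "\<dots> = 0"
      by (intro sig) (use T sets_lborel_boxes in blast)
    finally show "set_lebesgue_integral lebesgue S g = 0" .
  qed
  then show ?thesis by (simp add: g_def)
qed

lemma ae_zero_from_boxes:
  fixes f :: "R3 \<Rightarrow> complex"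
  assumes meas: "f \<in> borel_measurable lebesgue"
    and int: "\<And>a b. integrable lebesgue (\<lambda>x. indicator (box a b) x *\<^sub>R f x)"
    and zero: "\<And>a b. (LINT x|lebesgue. indicator (box a b) x *\<^sub>R f x) = 0"
  shows "AE x in lebesgue. f x = 0"
proof -
  have "AE x in lebesgue. \<forall>n::nat. indicator (box (\<chi> i. - real n) (\<chi> i. real n)) x *\<^sub>R f x = 0"
    unfolding AE_all_countable using ae_zero_one_box[OF assms] by blast
  then show ?thesis
  proof eventually_elim
    case (elim x)
    obtain n :: nat where n: "norm x < real n" using reals_Archimedean2 by blast
    have "x \<in> box (\<chi> i. - real n) (\<chi> i. real n)"
      unfolding mem_box_cart using n component_le_norm_cart[of x]
      by (auto simp: abs_le_iff) (smt (verit) component_le_norm_cart)+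
    then show ?case using elim[rule_format, of n] by simp
  qed
qed



lemma cont_meas_lebesgue:
  fixes f :: "R3 \<Rightarrow> 'b::{topological_space, second_countable_topology}"
  assumes "continuous_on UNIV f" shows "f \<in> borel_measurable lebesgue"
proof -
  have "f \<in> borel_measurable lborel" using borel_measurable_continuous_onI[OF assms] by simp
  then show ?thesis by (rule measurable_completion)
qed

definition G1 :: "real \<Rightarrow> real \<Rightarrow> real \<Rightarrow> real" where
  "G1 a b t = F0 (t - a) * F0 (b - t)"

definition psi :: "nat \<Rightarrow> real \<Rightarrow> real \<Rightarrow> real \<Rightarrow> real" where
  "psi n a b t = 1 - (1 - G1 a b t / 2) ^ n"

lemma G1_smooth: "smooth1 (G1 a b)"
proof -
  have 1: "smooth1 (\<lambda>t. F0 (1 * t + - a))" by (rule smooth1_affine[OF F0_smooth])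
  have 2: "smooth1 (\<lambda>t. F0 ((-1) * t + b))" by (rule smooth1_affine[OF F0_smooth])
  have "G1 a b = (\<lambda>t. F0 (1 * t + - a) * F0 ((-1) * t + b))"
    by (simp add: G1_def fun_eq_iff)
  then show ?thesis using smooth1_mult[OF 1 2] by simp
qed

lemma psi_smooth: "smooth1 (psi n a b)"
proof -
  have "smooth1 (\<lambda>t. (-1/2) * G1 a b t)" by (intro smooth1_mult smooth1_const G1_smooth)
  then have "smooth1 (\<lambda>t. 1 + (-1/2) * G1 a b t)" by (intro smooth1_add smooth1_const)
  then have "smooth1 (\<lambda>t. (1 + (-1/2) * G1 a b t) ^ n)" by (rule smooth1_power)
  then have "smooth1 (\<lambda>t. 1 + (-1) * (1 + (-1/2) * G1 a b t) ^ n)"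
    by (intro smooth1_add smooth1_mult smooth1_const)
  moreover have "psi n a b = (\<lambda>t. 1 + (-1) * (1 + (-1/2) * G1 a b t) ^ n)"
    by (simp add: psi_def fun_eq_iff)
  ultimately show ?thesis by simp
qed

lemma G1_zero: "\<not> (a < t \<and> t < b) \<Longrightarrow> G1 a b t = 0"
  by (auto simp: G1_def F0_zero)

lemma G1_pos: "a < t \<Longrightarrow> t < b \<Longrightarrow> G1 a b t > 0"
  by (simp add: G1_def F0_pos)

lemma G1_bounds: "0 \<le> G1 a b t" "G1 a b t \<le> 1"
  unfolding G1_def using F0_nonneg F0_le1
  by (auto intro: mult_nonneg_nonneg mult_le_one)

lemma psi_support: "psi n a b t \<noteq> 0 \<Longrightarrow> t \<in> {a..b}"
proof (rule ccontr)
  assume "t \<notin> {a..b}" "psi n a b t \<noteq> 0"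
  then have "\<not> (a < t \<and> t < b)" by auto
  then have "G1 a b t = 0" by (rule G1_zero)
  then have "psi n a b t = 0" by (simp add: psi_def)
  with \<open>psi n a b t \<noteq> 0\<close> show False by simp
qed

lemma psi_bounds: "0 \<le> psi n a b t" "psi n a b t \<le> 1"
proof -
  have "0 \<le> 1 - G1 a b t / 2" "1 - G1 a b t / 2 \<le> 1" using G1_bounds[of a b t] by auto
  then have "0 \<le> (1 - G1 a b t / 2) ^ n" "(1 - G1 a b t / 2) ^ n \<le> 1"
    by (auto intro: power_le_one)
  then show "0 \<le> psi n a b t" "psi n a b t \<le> 1" by (auto simp: psi_def)
qed

lemma psi_lim: "(\<lambda>n. psi n a b t) \<longlonglongrightarrow> (if a < t \<and> t < b then 1 else 0)"
proof (cases "a < t \<and> t < b")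
  case True
  then have "0 \<le> 1 - G1 a b t / 2" "1 - G1 a b t / 2 < 1" using G1_bounds[of a b t] G1_pos[of a t b] by auto
  then have "(\<lambda>n. (1 - G1 a b t / 2) ^ n) \<longlonglongrightarrow> 0" by (intro LIMSEQ_power_zero) auto
  then have "(\<lambda>n. 1 - (1 - G1 a b t / 2) ^ n) \<longlonglongrightarrow> 1 - 0" by (intro tendsto_diff tendsto_const)
  then show ?thesis using True by (simp add: psi_def)
next
  case False
  then have "psi n a b t = 0" for n using G1_zero[of a t b] by (simp add: psi_def)
  then have "(\<lambda>n. psi n a b t) = (\<lambda>n. 0)" by simp
  moreover have "(if a < t \<and> t < b then 1 else 0) = (0::real)" using False by simp
  ultimately show ?thesis by simp
qed

definition Phi :: "nat \<Rightarrow> R3 \<Rightarrow> R3 \<Rightarrow> R3 \<Rightarrow> real" where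
  "Phi n a b = prodfun (\<lambda>i. psi n (a $ i) (b $ i))"

lemma Phi_test: "test_fun (Phi n a b)"
  unfolding Phi_def by (rule prodfun_test[OF psi_smooth psi_support])

lemma Phi_cont: "continuous_on UNIV (Phi n a b)"
proof -
  have "Phi n a b differentiable (at x)" for x
    unfolding Phi_def by (rule prodfun_differentiable) (rule smooth1_differentiable[OF psi_smooth])
  then show ?thesis
    by (simp add: continuous_at_imp_continuous_on differentiable_imp_continuous_within)
qed

lemma Phi_lim: "(\<lambda>n. Phi n a b x) \<longlonglongrightarrow> indicator (box a b) x"
proof -
  have "(\<lambda>n. \<Prod>i\<in>UNIV. psi n (a $ i) (b $ i) (x $ i)) \<longlonglongrightarrow>
      (\<Prod>i\<in>UNIV. (if a $ i < x $ i \<and> x $ i < b $ i then 1 else 0))"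
    by (intro tendsto_prod psi_lim)
  moreover have "(\<Prod>i\<in>UNIV. (if a $ i < x $ i \<and> x $ i < b $ i then 1 else 0 :: real)) = indicator (box a b) x"
    by (auto simp: mem_box_cart indicator_def prod_zero_iff)
  ultimately show ?thesis by (simp add: Phi_def prodfun_def)
qed

lemma Phi_bound: "\<bar>Phi n a b x\<bar> \<le> indicator (cbox a b) x"
proof (cases "x \<in> cbox a b")
  case True
  have "\<bar>Phi n a b x\<bar> = (\<Prod>i\<in>UNIV. \<bar>psi n (a $ i) (b $ i) (x $ i)\<bar>)"
    by (simp add: Phi_def prodfun_def abs_prod)
  also have "\<dots> \<le> 1"
    using psi_bounds by (intro prod_le_1) auto
  finally show ?thesis using True by simp
next
  case False
  then obtain i where "\<not> (a $ i \<le> x $ i \<and> x $ i \<le> b $ i)" by (auto simp: mem_box_cart)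
  then have "psi n (a $ i) (b $ i) (x $ i) = 0" using psi_support by fastforce
  then have "Phi n a b x = 0" by (auto simp: Phi_def prodfun_def prod_zero_iff)
  then show ?thesis by simp
qed

lemma locint:
  assumes "square_integrable g"
  shows "integrable lebesgue (\<lambda>x. cmod (g x) * indicator (cbox a b) x)"
proof -
  have gm: "g \<in> borel_measurable lebesgue" and g2: "integrable lebesgue (\<lambda>x. (cmod (g x))\<^sup>2)"
    using assms by (auto simp: square_integrable_def)
  have ind: "integrable lebesgue (indicator (cbox a b) :: R3 \<Rightarrow> real)"
    using emeasure_lborel_cbox_finite[of a b] by (simp add: integrable_indicator_iff)
  have w: "integrable lebesgue (\<lambda>x. indicator (cbox a b) x + (cmod (g x))\<^sup>2)"
    using ind g2 by (rule Bochner_Integration.integrable_add)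
  show ?thesis
  proof (rule Bochner_Integration.integrable_bound[OF w])
    show "(\<lambda>x. cmod (g x) * indicator (cbox a b) x) \<in> borel_measurable lebesgue"
      using gm by (intro borel_measurable_times borel_measurable_norm borel_measurable_indicator) auto
    show "AE x in lebesgue. norm (cmod (g x) * indicator (cbox a b) x) \<le> norm (indicator (cbox a b) x + (cmod (g x))\<^sup>2)"
    proof (intro AE_I2)
      fix x
      have "cmod (g x) \<le> 1 + (cmod (g x))\<^sup>2"
      proof -
        have "0 \<le> (cmod (g x) - 1/2)\<^sup>2" by simp
        then show ?thesis by (simp add: power2_eq_square algebra_simps)
      qed
      then show "norm (cmod (g x) * indicator (cbox a b) x) \<le> norm (indicator (cbox a b) x + (cmod (g x))\<^sup>2)"
        by (auto simp: indicator_def)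
    qed
  qed
qed

lemma phi_conv:
  assumes "square_integrable g"
  shows "(\<lambda>n. LINT x|lebesgue. g x * complex_of_real (Phi n a b x)) \<longlonglongrightarrow>
           (LINT x|lebesgue. indicator (box a b) x *\<^sub>R g x)"
    and "integrable lebesgue (\<lambda>x. indicator (box a b) x *\<^sub>R g x)"
proof -
  have gm: "g \<in> borel_measurable lebesgue" using assms by (auto simp: square_integrable_def)
  have Pm: "Phi n a b \<in> borel_measurable lebesgue" for n by (rule cont_meas_lebesgue[OF Phi_cont])
  note w = locint[OF assms, of a b]
  have m1: "(\<lambda>x. indicator (box a b) x *\<^sub>R g x) \<in> borel_measurable lebesgue"
    using gm by (intro borel_measurable_scaleR borel_measurable_indicator) auto
  have m2: "(\<lambda>x. g x * complex_of_real (Phi n a b x)) \<in> borel_measurable lebesgue" for n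
    using gm Pm[of n] by measurable
  have lim: "AE x in lebesgue. (\<lambda>n. g x * complex_of_real (Phi n a b x)) \<longlonglongrightarrow> indicator (box a b) x *\<^sub>R g x"
  proof (intro AE_I2)
    fix x
    have "(\<lambda>n. g x * complex_of_real (Phi n a b x)) \<longlonglongrightarrow> g x * complex_of_real (indicator (box a b) x)"
      by (intro tendsto_mult tendsto_const tendsto_of_real Phi_lim)
    then show "(\<lambda>n. g x * complex_of_real (Phi n a b x)) \<longlonglongrightarrow> indicator (box a b) x *\<^sub>R g x"
      by (simp add: scaleR_conv_of_real mult.commute)
  qed
  have bnd: "AE x in lebesgue. norm (g x * complex_of_real (Phi n a b x)) \<le> cmod (g x) * indicator (cbox a b) x" for n
  proof (intro AE_I2)
    fix x
    show "norm (g x * complex_of_real (Phi n a b x)) \<le> cmod (g x) * indicator (cbox a b) x"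
      using Phi_bound[of n a b x] by (simp add: norm_mult mult_left_mono)
  qed
  show "(\<lambda>n. LINT x|lebesgue. g x * complex_of_real (Phi n a b x)) \<longlonglongrightarrow>
           (LINT x|lebesgue. indicator (box a b) x *\<^sub>R g x)"
    by (rule integral_dominated_convergence[OF m1 m2 w lim bnd])
  show "integrable lebesgue (\<lambda>x. indicator (box a b) x *\<^sub>R g x)"
    by (rule integrable_dominated_convergence[OF m1 m2 w lim bnd])
qed

lemma weak_unique:
  assumes g1: "square_integrable g1" and g2: "square_integrable g2"
    and w1: "weak_partial u i g1" and w2: "weak_partial u i g2"
  shows "AE x in lebesgue. g1 x = g2 x"
proof -
  have eq: "(LINT x|lebesgue. indicator (box a b) x *\<^sub>R g1 x) = (LINT x|lebesgue. indicator (box a b) x *\<^sub>R g2 x)" for a b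
  proof -
    have en: "(LINT x|lebesgue. g1 x * complex_of_real (Phi n a b x)) = (LINT x|lebesgue. g2 x * complex_of_real (Phi n a b x))" for n
    proof -
      have A: "(LINT x|lebesgue. u x * complex_of_real (pd i (Phi n a b) x)) = - (LINT x|lebesgue. g1 x * complex_of_real (Phi n a b x))"
        using w1 Phi_test[of n a b] unfolding weak_partial_def by blast
      have B: "(LINT x|lebesgue. u x * complex_of_real (pd i (Phi n a b) x)) = - (LINT x|lebesgue. g2 x * complex_of_real (Phi n a b x))"
        using w2 Phi_test[of n a b] unfolding weak_partial_def by blast
      show ?thesis using A B by simp
    qed
    have "(\<lambda>n. LINT x|lebesgue. g2 x * complex_of_real (Phi n a b x)) \<longlonglongrightarrow> (LINT x|lebesgue. indicator (box a b) x *\<^sub>R g1 x)"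
      using phi_conv(1)[OF g1, of a b] by (simp only: en)
    then show ?thesis using phi_conv(1)[OF g2, of a b] by (rule LIMSEQ_unique)
  qed
  have m1: "g1 \<in> borel_measurable lebesgue" "g2 \<in> borel_measurable lebesgue"
    using g1 g2 by (auto simp: square_integrable_def)
  have "AE x in lebesgue. g1 x - g2 x = 0"
  proof (rule ae_zero_from_boxes)
    show "(\<lambda>x. g1 x - g2 x) \<in> borel_measurable lebesgue" using m1 by measurable
    fix a b
    have i1: "integrable lebesgue (\<lambda>x. indicator (box a b) x *\<^sub>R g1 x)" by (rule phi_conv(2)[OF g1])
    have i2: "integrable lebesgue (\<lambda>x. indicator (box a b) x *\<^sub>R g2 x)" by (rule phi_conv(2)[OF g2])
    have e: "(\<lambda>x. indicator (box a b) x *\<^sub>R (g1 x - g2 x)) = (\<lambda>x. indicator (box a b) x *\<^sub>R g1 x - indicator (box a b) x *\<^sub>R g2 x)"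
      by (simp add: fun_eq_iff scaleR_diff_right)
    show "integrable lebesgue (\<lambda>x. indicator (box a b) x *\<^sub>R (g1 x - g2 x))"
      unfolding e using i1 i2 by (rule Bochner_Integration.integrable_diff)
    show "(LINT x|lebesgue. indicator (box a b) x *\<^sub>R (g1 x - g2 x)) = 0"
      unfolding e using i1 i2 eq[of a b] by simp
  qed
  then show ?thesis by simp
qed



lemma lebesgue_scale:
  fixes s :: real assumes s: "s \<noteq> 0"
  shows "(lebesgue :: R3 measure) = density (distr lebesgue lebesgue (\<lambda>x. s *\<^sub>R x)) (\<lambda>_. ennreal (\<bar>s\<bar> ^ 3))"
proof -
  have T: "(\<lambda>x::R3. 0 + (\<Sum>j\<in>Basis. (s * (x \<bullet> j)) *\<^sub>R j)) = (\<lambda>x. s *\<^sub>R x)"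
    unfolding scaleR_scaleR[symmetric] scaleR_sum_right[symmetric] euclidean_representation by simp
  have P: "(\<Prod>j\<in>(Basis :: R3 set). \<bar>s\<bar>) = \<bar>s\<bar> ^ 3"
    by simp
  show ?thesis
    using lebesgue_affine_euclidean[of "\<lambda>_::R3. s" 0] s unfolding T P by simp
qed

lemma scale_meas: "(\<lambda>x::R3. s *\<^sub>R x) \<in> lebesgue \<rightarrow>\<^sub>M lebesgue"
  by (rule lebesgue_measurable_scaling)

lemma scale_integrable_aux:
  fixes f :: "R3 \<Rightarrow> 'b::{banach, second_countable_topology}" and s :: real
  assumes s: "s \<noteq> 0" and f: "integrable lebesgue f"
  shows "integrable lebesgue (\<lambda>x. f (s *\<^sub>R x))"
    and "(LINT x|lebesgue. f x) = \<bar>s\<bar> ^ 3 *\<^sub>R (LINT x|lebesgue. f (s *\<^sub>R x))"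
proof -
  have fm: "f \<in> borel_measurable lebesgue" using f by auto
  let ?D = "distr lebesgue lebesgue (\<lambda>x::R3. s *\<^sub>R x)"
  have fmD: "f \<in> borel_measurable ?D" using fm by simp
  have L: "integral\<^sup>L lebesgue f = integral\<^sup>L (density ?D (\<lambda>_. ennreal (\<bar>s\<bar> ^ 3))) f"
    using lebesgue_scale[OF s] by metis
  have Li: "integrable (density ?D (\<lambda>_. ennreal (\<bar>s\<bar> ^ 3))) f"
    using lebesgue_scale[OF s] f by metis
  have "integrable ?D (\<lambda>x. \<bar>s\<bar> ^ 3 *\<^sub>R f x)"
    using Li by (subst (asm) integrable_density) (use fmD in auto)
  then have "integrable ?D f" using s
    using integrable_scaleR_right[of "1 / \<bar>s\<bar> ^ 3" ?D "\<lambda>x. \<bar>s\<bar> ^ 3 *\<^sub>R f x"] by simp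
  then show "integrable lebesgue (\<lambda>x. f (s *\<^sub>R x))"
    using integrable_distr_eq[OF scale_meas fm] by simp
  have "integral\<^sup>L (density ?D (\<lambda>_. ennreal (\<bar>s\<bar> ^ 3))) f = integral\<^sup>L ?D (\<lambda>x. \<bar>s\<bar> ^ 3 *\<^sub>R f x)"
    by (rule integral_density) (use fmD in auto)
  also have "\<dots> = \<bar>s\<bar> ^ 3 *\<^sub>R integral\<^sup>L ?D f" by simp
  also have "integral\<^sup>L ?D f = (LINT x|lebesgue. f (s *\<^sub>R x))"
    by (rule integral_distr[OF scale_meas fm])
  finally show "(LINT x|lebesgue. f x) = \<bar>s\<bar> ^ 3 *\<^sub>R (LINT x|lebesgue. f (s *\<^sub>R x))"
    using L by simp
qed

lemma scale_integrable_iff: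
  fixes f :: "R3 \<Rightarrow> 'b::{banach, second_countable_topology}" and s :: real
  assumes s: "s \<noteq> 0"
  shows "integrable lebesgue (\<lambda>x. f (s *\<^sub>R x)) \<longleftrightarrow> integrable lebesgue f"
proof
  assume "integrable lebesgue (\<lambda>x. f (s *\<^sub>R x))"
  from scale_integrable_aux(1)[OF _ this, of "1/s"] s show "integrable lebesgue f" by simp
qed (rule scale_integrable_aux(1)[OF s])

lemma scale_integral:
  fixes f :: "R3 \<Rightarrow> 'b::{banach, second_countable_topology}" and s :: real
  assumes s: "s \<noteq> 0"
  shows "(LINT x|lebesgue. f (s *\<^sub>R x)) = (1 / \<bar>s\<bar> ^ 3) *\<^sub>R (LINT x|lebesgue. f x)"
proof (cases "integrable lebesgue f")
  case True
  then show ?thesis using scale_integrable_aux(2)[OF s True] s by simp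
next
  case False
  then have "\<not> integrable lebesgue (\<lambda>x. f (s *\<^sub>R x))" using scale_integrable_iff[OF s, of f] by simp
  then show ?thesis using False by (simp add: not_integrable_integral_eq)
qed

lemma scale_meas_comp:
  fixes f :: "R3 \<Rightarrow> 'b::{topological_space}"
  assumes "f \<in> borel_measurable lebesgue" shows "(\<lambda>x. f (s *\<^sub>R x)) \<in> borel_measurable lebesgue"
  using measurable_compose[OF scale_meas assms] .



lemma pd_scale_aux:
  fixes h :: "R3 \<Rightarrow> real"
  assumes h: "\<And>x. h differentiable (at x)"
  shows "((\<lambda>y. k * h (c *\<^sub>R y)) has_derivative (\<lambda>v. k * frechet_derivative h (at (c *\<^sub>R y)) (c *\<^sub>R v))) (at y)"
    and "pd j (\<lambda>y. k * h (c *\<^sub>R y)) = (\<lambda>y. k * c * pd j h (c *\<^sub>R y))"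
proof -
  have H: "(h has_derivative frechet_derivative h (at (c *\<^sub>R y))) (at (c *\<^sub>R y))" for y
    using h frechet_derivative_works by blast
  have S: "((\<lambda>y. c *\<^sub>R y) has_derivative (\<lambda>v. c *\<^sub>R v)) (at y)" for y :: R3
    by (rule bounded_linear_imp_has_derivative) (rule bounded_linear_scaleR_right)
  have D: "((\<lambda>y. k * h (c *\<^sub>R y)) has_derivative (\<lambda>v. k * frechet_derivative h (at (c *\<^sub>R y)) (c *\<^sub>R v))) (at y)" for y
  proof -
    have "((\<lambda>y. h (c *\<^sub>R y)) has_derivative (\<lambda>v. frechet_derivative h (at (c *\<^sub>R y)) (c *\<^sub>R v))) (at y)"
      using has_derivative_compose[OF S H] .
    then show ?thesis by (rule has_derivative_mult_right)
  qed
  then show "((\<lambda>y. k * h (c *\<^sub>R y)) has_derivative (\<lambda>v. k * frechet_derivative h (at (c *\<^sub>R y)) (c *\<^sub>R v))) (at y)" .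
  show "pd j (\<lambda>y. k * h (c *\<^sub>R y)) = (\<lambda>y. k * c * pd j h (c *\<^sub>R y))"
  proof (rule ext)
    fix y
    have lin: "linear (frechet_derivative h (at (c *\<^sub>R y)))"
      using H[of y] by (rule has_derivative_linear)
    have "pd j (\<lambda>y. k * h (c *\<^sub>R y)) y = k * frechet_derivative h (at (c *\<^sub>R y)) (c *\<^sub>R axis j 1)"
      unfolding pd_def frechet_derivative_at[OF D[of y], symmetric] by (rule refl)
    also have "\<dots> = k * c * pd j h (c *\<^sub>R y)"
      unfolding pd_def using linear_scale[OF lin] by simp
    finally show "pd j (\<lambda>y. k * h (c *\<^sub>R y)) y = k * c * pd j h (c *\<^sub>R y)" .
  qed
qed

lemma pds_scale:
  assumes "smooth_fun \<phi>"
  shows "pds is (\<lambda>y. \<phi> (c *\<^sub>R y)) = (\<lambda>y. c ^ length is * pds is \<phi> (c *\<^sub>R y))"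
proof (induction "is")
  case Nil
  then show ?case by simp
next
  case (Cons j "is")
  have h: "\<And>x. pds is \<phi> differentiable (at x)" using assms by (simp add: smooth_fun_def)
  have "pds (j # is) (\<lambda>y. \<phi> (c *\<^sub>R y)) = pd j (\<lambda>y. c ^ length is * pds is \<phi> (c *\<^sub>R y))"
    using Cons by simp
  also have "\<dots> = (\<lambda>y. c ^ length is * c * pd j (pds is \<phi>) (c *\<^sub>R y))"
    by (rule pd_scale_aux(2)[OF h])
  finally show ?case by (simp add: mult.commute)
qed

lemma test_scale:
  assumes t: "test_fun \<phi>" and c: "c \<noteq> 0"
  shows "test_fun (\<lambda>y. \<phi> (c *\<^sub>R y))"
proof -
  have sm: "smooth_fun \<phi>" using t by (simp add: test_fun_def)
  have "smooth_fun (\<lambda>y. \<phi> (c *\<^sub>R y))"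
    unfolding smooth_fun_def
  proof (intro allI)
    fix "is" x
    have h: "\<And>x. pds is \<phi> differentiable (at x)" using sm by (simp add: smooth_fun_def)
    show "pds is (\<lambda>y. \<phi> (c *\<^sub>R y)) differentiable (at x)"
      unfolding pds_scale[OF sm] differentiable_def
      using pd_scale_aux(1)[OF h] by blast
  qed
  moreover have "{y. \<phi> (c *\<^sub>R y) \<noteq> 0} = (\<lambda>x. (1/c) *\<^sub>R x) ` {x. \<phi> x \<noteq> 0}"
  proof (intro set_eqI iffI)
    fix y assume "y \<in> {y. \<phi> (c *\<^sub>R y) \<noteq> 0}"
    then show "y \<in> (\<lambda>x. (1/c) *\<^sub>R x) ` {x. \<phi> x \<noteq> 0}"
      using c by (intro image_eqI[of _ _ "c *\<^sub>R y"]) auto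
  qed (use c in auto)
  then have "closure {y. \<phi> (c *\<^sub>R y) \<noteq> 0} = (\<lambda>x. (1/c) *\<^sub>R x) ` closure {x. \<phi> x \<noteq> 0}"
    using closure_scaleR[of "1/c" "{x. \<phi> x \<noteq> 0}"] by simp
  moreover have "compact ((\<lambda>x. (1/c) *\<^sub>R x) ` closure {x. \<phi> x \<noteq> 0})"
    using t by (intro compact_scaling) (simp add: test_fun_def)
  ultimately show ?thesis by (simp add: test_fun_def)
qed

definition us :: "real \<Rightarrow> (R3 \<Rightarrow> complex) \<Rightarrow> R3 \<Rightarrow> complex" where
  "us s u x = complex_of_real (s powr (3/2)) * u (s *\<^sub>R x)"

definition ug :: "real \<Rightarrow> (R3 \<Rightarrow> complex) \<Rightarrow> R3 \<Rightarrow> complex" where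
  "ug s g x = complex_of_real (s powr (5/2)) * g (s *\<^sub>R x)"

lemma weak_scale:
  assumes s: "s > 0" and w: "weak_partial u i g"
  shows "weak_partial (us s u) i (ug s g)"
  unfolding weak_partial_def
proof (intro allI impI)
  fix \<phi> assume t: "test_fun \<phi>"
  define \<phi>s where "\<phi>s y = \<phi> ((1/s) *\<^sub>R y)" for y
  have ts: "test_fun \<phi>s" unfolding \<phi>s_def using test_scale[OF t, of "1/s"] s by simp
  have sm: "smooth_fun \<phi>" using t by (simp add: test_fun_def)
  have pdphis: "pd i \<phi>s z = (1/s) * pd i \<phi> ((1/s) *\<^sub>R z)" for z
    using fun_cong[OF pds_scale[OF sm, of "[i]" "1/s"], of z] by (simp add: \<phi>s_def[abs_def])
  have pdphi: "pd i \<phi> x = s * pd i \<phi>s (s *\<^sub>R x)" for x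
    using s by (simp add: pdphis)
  have phi: "\<phi> x = \<phi>s (s *\<^sub>R x)" for x
    using s by (simp add: \<phi>s_def)
  have wd: "(LINT z|lebesgue. u z * complex_of_real (pd i \<phi>s z)) = - (LINT z|lebesgue. g z * complex_of_real (\<phi>s z))"
    using w ts unfolding weak_partial_def by blast
  have "(LINT x|lebesgue. us s u x * complex_of_real (pd i \<phi> x))
      = (LINT x|lebesgue. (\<lambda>z. complex_of_real (s powr (3/2) * s) * (u z * complex_of_real (pd i \<phi>s z))) (s *\<^sub>R x))"
    by (rule Bochner_Integration.integral_cong) (auto simp: us_def pdphi)
  also have "\<dots> = (1 / \<bar>s\<bar> ^ 3) *\<^sub>R (complex_of_real (s powr (3/2) * s) * (LINT z|lebesgue. u z * complex_of_real (pd i \<phi>s z)))"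
    using s by (subst scale_integral) auto
  also have "\<dots> = (1 / \<bar>s\<bar> ^ 3) *\<^sub>R (complex_of_real (s powr (5/2)) * - (LINT z|lebesgue. g z * complex_of_real (\<phi>s z)))"
  proof -
    have "s powr (3/2) * s = s powr (5/2)"
    proof -
      have "s powr (3/2) * s = s powr (3/2) * s powr 1" using s by simp
      also have "\<dots> = s powr (3/2 + 1)" by (rule powr_add[symmetric])
      finally show ?thesis by simp
    qed
    then show ?thesis by (simp add: wd)
  qed
  also have "\<dots> = - ((1 / \<bar>s\<bar> ^ 3) *\<^sub>R (complex_of_real (s powr (5/2)) * (LINT z|lebesgue. g z * complex_of_real (\<phi>s z))))"
    by simp
  also have "(1 / \<bar>s\<bar> ^ 3) *\<^sub>R (complex_of_real (s powr (5/2)) * (LINT z|lebesgue. g z * complex_of_real (\<phi>s z)))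
      = (LINT x|lebesgue. (\<lambda>z. complex_of_real (s powr (5/2)) * (g z * complex_of_real (\<phi>s z))) (s *\<^sub>R x))"
    using s by (subst scale_integral) auto
  also have "\<dots> = (LINT x|lebesgue. ug s g x * complex_of_real (\<phi> x))"
    by (rule Bochner_Integration.integral_cong) (auto simp: ug_def phi)
  finally show "(LINT x|lebesgue. us s u x * complex_of_real (pd i \<phi> x)) = - (LINT x|lebesgue. ug s g x * complex_of_real (\<phi> x))" .
qed



lemma cmod_us: "s > 0 \<Longrightarrow> cmod (us s u x) = s powr (3/2) * cmod (u (s *\<^sub>R x))"
  by (simp add: us_def norm_mult)

lemma cmod_ug: "s > 0 \<Longrightarrow> cmod (ug s g x) = s powr (5/2) * cmod (g (s *\<^sub>R x))"
  by (simp add: ug_def norm_mult)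

lemma powr_sq: fixes s a :: real shows "s > 0 \<Longrightarrow> (s powr (a/2))\<^sup>2 = s powr a"
  unfolding power2_eq_square powr_add[symmetric] by simp

lemma pow_facts: fixes s k :: real assumes "s > 0" shows
  "s ^ 5 * ((1 / \<bar>s\<bar> ^ 3) * k) = s\<^sup>2 * k"
  "s ^ 4 * ((1 / \<bar>s\<bar> ^ 3) * k) = s * k"
  "s ^ 7 * ((1 / \<bar>s\<bar> ^ 3) * k) = s ^ 4 * k"
  "s ^ 3 * ((1 / \<bar>s\<bar> ^ 3) * k) = k"
  "s ^ 7 = s * s ^ 6"
  using assms by (simp_all add: field_simps eval_nat_numeral)

lemma aux67: fixes s P d :: real shows "s > 0 \<Longrightarrow> s ^ 6 * P / d = s ^ 7 * (P / (s * d))"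
  by (cases "d = 0") (simp_all add: field_simps pow_facts(5))

lemma sq_integrable_scale:
  assumes s: "s > 0" and g: "square_integrable g" and c: "c > 0"
  shows "square_integrable (\<lambda>x. complex_of_real c * g (s *\<^sub>R x))"
proof -
  have gm: "g \<in> borel_measurable lebesgue" and gi: "integrable lebesgue (\<lambda>x. (cmod (g x))\<^sup>2)"
    using g by (auto simp: square_integrable_def)
  have m: "(\<lambda>x. complex_of_real c * g (s *\<^sub>R x)) \<in> borel_measurable lebesgue"
    using scale_meas_comp[OF gm, of s] by measurable
  have "integrable lebesgue (\<lambda>x. (\<lambda>z. (cmod (g z))\<^sup>2) (s *\<^sub>R x))"
    using scale_integrable_iff[of s "\<lambda>z. (cmod (g z))\<^sup>2"] s gi by simp
  then have "integrable lebesgue (\<lambda>x. c\<^sup>2 * (cmod (g (s *\<^sub>R x)))\<^sup>2)" by simp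
  moreover have "(\<lambda>x. c\<^sup>2 * (cmod (g (s *\<^sub>R x)))\<^sup>2) = (\<lambda>x. (cmod (complex_of_real c * g (s *\<^sub>R x)))\<^sup>2)"
    using c by (simp add: norm_mult power_mult_distrib)
  ultimately show ?thesis using m by (simp add: square_integrable_def)
qed

lemma us_sq: "s > 0 \<Longrightarrow> square_integrable u \<Longrightarrow> square_integrable (us s u)"
  unfolding us_def[abs_def] by (rule sq_integrable_scale) auto

lemma ug_sq: "s > 0 \<Longrightarrow> square_integrable g \<Longrightarrow> square_integrable (ug s g)"
  unfolding ug_def[abs_def] by (rule sq_integrable_scale) auto

lemma wgrad_props:
  assumes "u \<in> H1"
  shows "square_integrable (wgrad u i) \<and> weak_partial u i (wgrad u i)"
proof -
  have "\<exists>g. square_integrable g \<and> weak_partial u i g" using assms by (simp add: H1_def)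
  then show ?thesis unfolding wgrad_def by (rule someI_ex)
qed

lemma us_H1: assumes s: "s > 0" and u: "u \<in> H1" shows "us s u \<in> H1"
proof -
  have "square_integrable (us s u)" using u s by (intro us_sq) (auto simp: H1_def)
  moreover have "\<exists>g. square_integrable g \<and> weak_partial (us s u) i g" for i
    using wgrad_props[OF u, of i] s ug_sq weak_scale by blast
  ultimately show ?thesis by (simp add: H1_def)
qed

lemma L2sq_us: assumes s: "s > 0" shows "L2sq (us s u) = L2sq u"
proof -
  have "L2sq (us s u) = (LINT x|lebesgue. s ^ 3 * (\<lambda>z. (cmod (u z))\<^sup>2) (s *\<^sub>R x))"
    unfolding L2sq_def using s
    by (intro Bochner_Integration.integral_cong) (simp_all add: cmod_us power_mult_distrib powr_sq)
  also have "\<dots> = s ^ 3 * ((1 / \<bar>s\<bar> ^ 3) * L2sq u)"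
    using s scale_integral[of s "\<lambda>z. (cmod (u z))\<^sup>2"] by (simp add: L2sq_def)
  finally show ?thesis using pow_facts(4)[OF s] by simp
qed

lemma Lpow_us: assumes s: "s > 0" and p: "p > 0"
  shows "Lpow p (us s u) = s powr (3/2 * p) / s ^ 3 * Lpow p u"
proof -
  have "Lpow p (us s u) = (LINT x|lebesgue. s powr (3/2 * p) * (\<lambda>z. cmod (u z) powr p) (s *\<^sub>R x))"
    unfolding Lpow_def using s
    by (intro Bochner_Integration.integral_cong) (simp_all add: cmod_us powr_mult powr_powr)
  also have "\<dots> = s powr (3/2 * p) * ((1 / \<bar>s\<bar> ^ 3) * Lpow p u)"
    using s scale_integral[of s "\<lambda>z. cmod (u z) powr p"] by (simp add: Lpow_def)
  finally show ?thesis using s by simp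
qed

lemma dist_scale: "dist (s *\<^sub>R x) (s *\<^sub>R y) = \<bar>s\<bar> * dist x y"
  for x y :: R3
  by (simp add: dist_norm scaleR_diff_right[symmetric])

lemma Dcoul_us: assumes s: "s > 0" shows "Dcoul (us s u) = s * Dcoul u"
proof -
  define A where "A z = (cmod (u z))\<^sup>2" for z
  define K where "K w = (LINT z|lebesgue. A w * A z / dist w z)" for w
  have inner: "(LINT y|lebesgue. (cmod (us s u x))\<^sup>2 * (cmod (us s u y))\<^sup>2 / dist x y) = s ^ 4 * K (s *\<^sub>R x)" for x
  proof -
    have "(LINT y|lebesgue. (cmod (us s u x))\<^sup>2 * (cmod (us s u y))\<^sup>2 / dist x y)
        = (LINT y|lebesgue. s ^ 7 * (\<lambda>z. A (s *\<^sub>R x) * A z / dist (s *\<^sub>R x) z) (s *\<^sub>R y))"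
    proof (intro Bochner_Integration.integral_cong refl)
      fix y
      have "(cmod (us s u x))\<^sup>2 * (cmod (us s u y))\<^sup>2 = s ^ 6 * (A (s *\<^sub>R x) * A (s *\<^sub>R y))"
        using s by (simp add: cmod_us power_mult_distrib powr_sq A_def)
      moreover have "dist (s *\<^sub>R x) (s *\<^sub>R y) = s * dist x y" using s by (simp add: dist_scale)
      ultimately show "(cmod (us s u x))\<^sup>2 * (cmod (us s u y))\<^sup>2 / dist x y
          = s ^ 7 * (\<lambda>z. A (s *\<^sub>R x) * A z / dist (s *\<^sub>R x) z) (s *\<^sub>R y)"
        using aux67[OF s, of "A (s *\<^sub>R x) * A (s *\<^sub>R y)" "dist x y"] by simp
    qed
    also have "\<dots> = s ^ 7 * (LINT y|lebesgue. (\<lambda>z. A (s *\<^sub>R x) * A z / dist (s *\<^sub>R x) z) (s *\<^sub>R y))"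
      by (rule integral_mult_right_zero)
    also have "(LINT y|lebesgue. (\<lambda>z. A (s *\<^sub>R x) * A z / dist (s *\<^sub>R x) z) (s *\<^sub>R y))
        = (1 / \<bar>s\<bar> ^ 3) *\<^sub>R (LINT z|lebesgue. A (s *\<^sub>R x) * A z / dist (s *\<^sub>R x) z)"
      using s by (intro scale_integral) simp
    also have "s ^ 7 * ((1 / \<bar>s\<bar> ^ 3) *\<^sub>R (LINT z|lebesgue. A (s *\<^sub>R x) * A z / dist (s *\<^sub>R x) z))
        = s ^ 4 * K (s *\<^sub>R x)"
      using pow_facts(3)[OF s] by (simp add: K_def)
    finally show ?thesis .
  qed
  have "Dcoul (us s u) = (LINT x|lebesgue. s ^ 4 * K (s *\<^sub>R x))"
    unfolding Dcoul_def by (simp only: inner)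
  also have "\<dots> = s ^ 4 * (LINT x|lebesgue. K (s *\<^sub>R x))"
    by (rule integral_mult_right_zero)
  also have "(LINT x|lebesgue. K (s *\<^sub>R x)) = (1 / \<bar>s\<bar> ^ 3) *\<^sub>R (LINT x|lebesgue. K x)"
    using s by (intro scale_integral) simp
  also have "(LINT x|lebesgue. K x) = Dcoul u"
    unfolding Dcoul_def K_def A_def by (rule refl)
  finally show ?thesis using pow_facts(2)[OF s] by simp
qed

lemma kinetic_us: assumes s: "s > 0" and u: "u \<in> H1"
  shows "kinetic (us s u) = s\<^sup>2 * kinetic u"
proof -
  have usH: "us s u \<in> H1" by (rule us_H1[OF s u])
  have ae: "AE x in lebesgue. wgrad (us s u) i x = ug s (wgrad u i) x" for i
  proof (rule weak_unique)
    show "square_integrable (wgrad (us s u) i)" "weak_partial (us s u) i (wgrad (us s u) i)"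
      using wgrad_props[OF usH, of i] by auto
    show "square_integrable (ug s (wgrad u i))" using ug_sq[OF s] wgrad_props[OF u, of i] by auto
    show "weak_partial (us s u) i (ug s (wgrad u i))" using weak_scale[OF s] wgrad_props[OF u, of i] by auto
  qed
  have aeall: "AE x in lebesgue. \<forall>i\<in>UNIV. wgrad (us s u) i x = ug s (wgrad u i) x"
    using ae by (subst AE_finite_all) auto
  have m1: "wgrad (us s u) i \<in> borel_measurable lebesgue" for i
    using wgrad_props[OF usH, of i] by (simp add: square_integrable_def)
  have m2: "wgrad u i \<in> borel_measurable lebesgue" for i
    using wgrad_props[OF u, of i] by (simp add: square_integrable_def)
  have m3: "ug s (wgrad u i) \<in> borel_measurable lebesgue" for i
    unfolding ug_def[abs_def] using scale_meas_comp[OF m2[of i], of s] by measurable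
  have "kinetic (us s u) = (LINT x|lebesgue. (\<Sum>i\<in>UNIV. (cmod (ug s (wgrad u i) x))\<^sup>2))"
    unfolding kinetic_def
  proof (rule integral_cong_AE)
    show "(\<lambda>x. \<Sum>i\<in>UNIV. (cmod (wgrad (us s u) i x))\<^sup>2) \<in> borel_measurable lebesgue"
      using m1 by measurable
    show "(\<lambda>x. \<Sum>i\<in>UNIV. (cmod (ug s (wgrad u i) x))\<^sup>2) \<in> borel_measurable lebesgue"
      using m3 by measurable
    show "AE x in lebesgue. (\<Sum>i\<in>UNIV. (cmod (wgrad (us s u) i x))\<^sup>2) = (\<Sum>i\<in>UNIV. (cmod (ug s (wgrad u i) x))\<^sup>2)"
      using aeall by eventually_elim simp
  qed
  also have "\<dots> = (LINT x|lebesgue. s ^ 5 * (\<lambda>z. \<Sum>i\<in>UNIV. (cmod (wgrad u i z))\<^sup>2) (s *\<^sub>R x))"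
    using s by (intro Bochner_Integration.integral_cong refl)
      (simp add: cmod_ug power_mult_distrib powr_sq sum_distrib_left)
  also have "\<dots> = s ^ 5 * ((1 / \<bar>s\<bar> ^ 3) * kinetic u)"
    using s scale_integral[of s "\<lambda>z. \<Sum>i\<in>UNIV. (cmod (wgrad u i z))\<^sup>2"] by (simp add: kinetic_def)
  finally show ?thesis using pow_facts(1)[OF s] by simp
qed



theorem proposition2p11:
  fixes C \<alpha> M :: real and \<phi> :: "R3 \<Rightarrow> complex"
  assumes "0 < \<alpha>" and "\<alpha> < 2/3" and "C > 0" and "M > 0"
    and "is_minimizer C \<alpha> M \<phi>"
  shows "kinetic \<phi> + 1/4 * Dcoul \<phi> - 3 * \<alpha> * C / (2*\<alpha>+2) * Lpow (2*\<alpha>+2) \<phi> = 0"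
proof -
  have a: "0 < \<alpha>" using assms by simp
  have phiS: "\<phi> \<in> Sigma_M M" and minE: "\<And>v. v \<in> Sigma_M M \<Longrightarrow> energy C \<alpha> \<phi> \<le> energy C \<alpha> v"
    using assms(5) by (auto simp: is_minimizer_def)
  have H: "\<phi> \<in> H1" and L: "L2sq \<phi> = M" using phiS by (auto simp: Sigma_M_def)
  define K where "K = kinetic \<phi>"
  define D where "D = Dcoul \<phi>"
  define P where "P = Lpow (2*\<alpha>+2) \<phi>"
  define f where "f s = 1/2 * (s\<^sup>2 * K) + 1/4 * (s * D) - C / (2*\<alpha>+2) * (s powr (3*\<alpha>) * P)" for s
  have fE: "energy C \<alpha> (us s \<phi>) = f s" if s: "s > 0" for s
  proof -
    have "s powr (3 / 2 * (2 * \<alpha> + 2)) / s ^ 3 = s powr (3 * \<alpha>)"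
    proof -
      have e: "3 / 2 * (2 * \<alpha> + 2) = 3 * \<alpha> + 3" by (simp add: algebra_simps)
      have "s powr (3 / 2 * (2 * \<alpha> + 2)) = s powr (3 * \<alpha>) * s powr 3"
        unfolding e by (rule powr_add)
      also have "s powr 3 = s ^ 3" using s by (simp only: powr_numeral less_imp_le)
      finally show ?thesis using s by simp
    qed
    moreover have "2*\<alpha>+2 > 0" using a by simp
    ultimately have "Lpow (2*\<alpha>+2) (us s \<phi>) = s powr (3*\<alpha>) * P"
      using Lpow_us[OF s, of "2*\<alpha>+2" \<phi>] unfolding P_def by simp
    then show ?thesis
      unfolding energy_def f_def kinetic_us[OF s H] Dcoul_us[OF s, of \<phi>] K_def D_def
      by (rule arg_cong[where f="\<lambda>t. 1 / 2 * (s\<^sup>2 * kinetic \<phi>) + 1 / 4 * (s * Dcoul \<phi>) - C / (2 * \<alpha> + 2) * t"])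
  qed
  have f1: "f 1 = energy C \<alpha> \<phi>"
    by (simp add: f_def energy_def K_def D_def P_def)
  have fmin: "f 1 \<le> f s" if s: "s > 0" for s
  proof -
    have "us s \<phi> \<in> Sigma_M M"
      using us_H1[OF s H] L2sq_us[OF s, of \<phi>] L by (simp add: Sigma_M_def)
    then have "energy C \<alpha> \<phi> \<le> energy C \<alpha> (us s \<phi>)" by (rule minE)
    then show ?thesis unfolding f1 fE[OF s] .
  qed
  have der: "(f has_real_derivative (1/2 * (2 * K) + 1/4 * D - C / (2*\<alpha>+2) * (3 * \<alpha> * P))) (at 1)"
  proof -
    have p: "((\<lambda>s. s powr (3*\<alpha>)) has_real_derivative 3 * \<alpha>) (at 1)"
      using has_real_derivative_powr[of 1 "3*\<alpha>"] by simp
    show ?thesis unfolding f_def[abs_def]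
      using a by (auto intro!: derivative_eq_intros p)
  qed
  have "1/2 * (2 * K) + 1/4 * D - C / (2*\<alpha>+2) * (3 * \<alpha> * P) = 0"
  proof (rule DERIV_local_min[OF der, of "1/2"])
    show "\<forall>y. \<bar>1 - y\<bar> < 1/2 \<longrightarrow> f 1 \<le> f y"
    proof (intro allI impI)
      fix y :: real assume "\<bar>1 - y\<bar> < 1/2"
      then have "y > 0" by linarith
      then show "f 1 \<le> f y" by (rule fmin)
    qed
  qed simp
  then show ?thesis using a by (simp add: K_def D_def P_def algebra_simps)
qed

end
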